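(* Let $p\in K$, let $M$ be a PPV-extension of $K$ for $\delta^2Y-p\,\delta Y=0$, let $\eta\in M$ with $\delta^2\eta=p\,\delta\eta$ and $\delta\eta\neq0$, and let $L:=K\langle\delta\eta\rangle_\Delta$. Then $\delta\eta$ is not $\partial$-transcendental over $K$; consequently $L$ is finitely generated as a field over $K$ (it has finite transcendence degree over $K$).
   Context: All fields have characteristic zero. $F$ is a differentially closed $\partial$-field (every system of polynomial differential equations over $F$ having a solution in some $\partial$-field extension has one in $F$). $K:=F(x)$ with commuting derivations $\delta,\partial$ given by $\delta x=1$, $\partial x=0$, $\delta|_F=0$; $K^\delta=F$. For a $\Delta$-field extension $M$ of $K$ ($\Delta=\{\delta,\partial\}$) and $y\in M$, $K\langle y\rangle_\Delta$ denotes the $\Delta$-subfield generated over $K$ by all iterated derivatives of $y$. $y$ is $\partial$-transcendental over $K$ if $y,\partial y,\partial^2 y,\dots$ are algebraically independent over $K$. A PPV-extension of $K$ for $\delta^2Y-p\delta Y=0$ is a $\Delta$-field extension $M\supseteq K$ containing two $K^\delta$-linearly independent solutions, generated as a $\Delta$-field over $K$ by them, and with $M^\delta=K^\delta$. *)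

theory Defs
  imports Main "HOL-Algebra.Ring"
begin

text \<open>The ambient type 'a (a field of characteristic zero) plays the role of the
  Delta-field M; subfields of M are subsets of 'a.\<close>

definition is_subfield :: "'a::field set \<Rightarrow> bool" where
  "is_subfield S \<longleftrightarrow> 0 \<in> S \<and> 1 \<in> S \<and>
     (\<forall>a\<in>S. \<forall>b\<in>S. a + b \<in> S \<and> a * b \<in> S) \<and>
     (\<forall>a\<in>S. - a \<in> S \<and> inverse a \<in> S)"

definition field_gen :: "'a::field set \<Rightarrow> 'a set" where
  "field_gen A = \<Inter>{S. is_subfield S \<and> A \<subseteq> S}"

definition dfield_gen :: "('a::field \<Rightarrow> 'a) set \<Rightarrow> 'a set \<Rightarrow> 'a set" where
  "dfield_gen Ds A = \<Inter>{S. is_subfield S \<and> A \<subseteq> S \<and> (\<forall>D\<in>Ds. D ` S \<subseteq> S)}"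

definition is_derivation :: "('a::field \<Rightarrow> 'a) \<Rightarrow> bool" where
  "is_derivation D \<longleftrightarrow> (\<forall>a b. D (a + b) = D a + D b \<and> D (a * b) = a * D b + D a * b)"

text \<open>A polynomial is given by a finite
  nonempty set S of exponent vectors (supported on {0..<n}) and nonzero coefficients c.\<close>
definition alg_dependent :: "'a::field set \<Rightarrow> (nat \<Rightarrow> 'a) \<Rightarrow> nat \<Rightarrow> bool" where
  "alg_dependent K f n \<longleftrightarrow>
     (\<exists>S c. finite S \<and> S \<noteq> {} \<and> (\<forall>e\<in>S. \<forall>i\<ge>n. e i = 0) \<and>
        (\<forall>e\<in>S. c e \<in> K \<and> c e \<noteq> 0) \<and>
        (\<Sum>e\<in>S. c e * (\<Prod>i<n. f i ^ e i)) = 0)"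

definition d_transcendental :: "'a::field set \<Rightarrow> ('a \<Rightarrow> 'a) \<Rightarrow> 'a \<Rightarrow> bool" where
  "d_transcendental K D y \<longleftrightarrow> (\<forall>n. \<not> alg_dependent K (\<lambda>i. (D ^^ i) y) n)"

definition transcendental_over :: "'a::field set \<Rightarrow> 'a \<Rightarrow> bool" where
  "transcendental_over F x \<longleftrightarrow>
     (\<forall>q::'a list. (\<forall>c\<in>set q. c \<in> F) \<and> (\<exists>c\<in>set q. c \<noteq> 0) \<longrightarrow>
        (\<Sum>i<length q. q ! i * x ^ i) \<noteq> 0)"

text \<open>Differential polynomial expressions with coefficients of type 'c in the
  differential indeterminates y_0, y_1, ...; DVar i k stands for the k-th derivative of y_i.\<close>
datatype 'c dpol = DConst 'c | DVar nat nat | DAdd "'c dpol" "'c dpol"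
  | DMul "'c dpol" "'c dpol" | DNeg "'c dpol"

primrec deval :: "('b, 'm) ring_scheme \<Rightarrow> ('b \<Rightarrow> 'b) \<Rightarrow> ('c \<Rightarrow> 'b) \<Rightarrow> (nat \<Rightarrow> 'b) \<Rightarrow> 'c dpol \<Rightarrow> 'b" where
  "deval E D h y (DConst c) = h c"
| "deval E D h y (DVar i k) = (D ^^ k) (y i)"
| "deval E D h y (DAdd P Q) = deval E D h y P \<oplus>\<^bsub>E\<^esub> deval E D h y Q"
| "deval E D h y (DMul P Q) = deval E D h y P \<otimes>\<^bsub>E\<^esub> deval E D h y Q"
| "deval E D h y (DNeg P) = \<ominus>\<^bsub>E\<^esub> deval E D h y P"

primrec deval0 :: "('a::field \<Rightarrow> 'a) \<Rightarrow> (nat \<Rightarrow> 'a) \<Rightarrow> 'a dpol \<Rightarrow> 'a" where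
  "deval0 D y (DConst c) = c"
| "deval0 D y (DVar i k) = (D ^^ k) (y i)"
| "deval0 D y (DAdd P Q) = deval0 D y P + deval0 D y Q"
| "deval0 D y (DMul P Q) = deval0 D y P * deval0 D y Q"
| "deval0 D y (DNeg P) = - deval0 D y P"

definition dfield_ext :: "'a::field set \<Rightarrow> ('a \<Rightarrow> 'a) \<Rightarrow> 'b ring \<Rightarrow> ('b \<Rightarrow> 'b) \<Rightarrow> ('a \<Rightarrow> 'b) \<Rightarrow> bool" where
  "dfield_ext F dp E D h \<longleftrightarrow> field E \<and>
     D ` carrier E \<subseteq> carrier E \<and>
     (\<forall>a\<in>carrier E. \<forall>b\<in>carrier E. D (a \<oplus>\<^bsub>E\<^esub> b) = D a \<oplus>\<^bsub>E\<^esub> D b \<and>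
        D (a \<otimes>\<^bsub>E\<^esub> b) = (a \<otimes>\<^bsub>E\<^esub> D b) \<oplus>\<^bsub>E\<^esub> (D a \<otimes>\<^bsub>E\<^esub> b)) \<and>
     h ` F \<subseteq> carrier E \<and> h 1 = \<one>\<^bsub>E\<^esub> \<and>
     (\<forall>a\<in>F. \<forall>b\<in>F. h (a + b) = h a \<oplus>\<^bsub>E\<^esub> h b \<and> h (a * b) = h a \<otimes>\<^bsub>E\<^esub> h b) \<and>
     (\<forall>a\<in>F. D (h a) = h (dp a))"

text \<open>Extensions are taken with carriers in the ambient type 'a; since F \<subseteq> 'a is infinite
  and the extension generated by a solution has cardinality |F|, this loses no generality.\<close>
definition diff_closed :: "'a::field set \<Rightarrow> ('a \<Rightarrow> 'a) \<Rightarrow> bool" where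
  "diff_closed F dp \<longleftrightarrow>
     (\<forall>Ps :: 'a dpol list. (\<forall>P\<in>set Ps. set_dpol P \<subseteq> F) \<longrightarrow>
        (\<exists>(E::'a ring) D h y. dfield_ext F dp E D h \<and> (\<forall>i. y i \<in> carrier E) \<and>
            (\<forall>P\<in>set Ps. deval E D h y P = \<zero>\<^bsub>E\<^esub>)) \<longrightarrow>
        (\<exists>y. (\<forall>i. y i \<in> F) \<and> (\<forall>P\<in>set Ps. deval0 dp y P = 0)))"

end

theory Submission
  imports Defs "HOL-Computational_Algebra.Polynomial_Factorial"
begin

section \<open>Subfields\<close>

lemma sf_0: "is_subfield S \<Longrightarrow> 0 \<in> S" by (simp add: is_subfield_def)
lemma sf_1: "is_subfield S \<Longrightarrow> 1 \<in> S" by (simp add: is_subfield_def)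
lemma sf_add: "is_subfield S \<Longrightarrow> a \<in> S \<Longrightarrow> b \<in> S \<Longrightarrow> a + b \<in> S" by (simp add: is_subfield_def)
lemma sf_mult: "is_subfield S \<Longrightarrow> a \<in> S \<Longrightarrow> b \<in> S \<Longrightarrow> a * b \<in> S" by (simp add: is_subfield_def)
lemma sf_uminus: "is_subfield S \<Longrightarrow> a \<in> S \<Longrightarrow> - a \<in> S" by (simp add: is_subfield_def)
lemma sf_inverse: "is_subfield S \<Longrightarrow> a \<in> S \<Longrightarrow> inverse a \<in> S" by (simp add: is_subfield_def)
lemma sf_diff: "is_subfield S \<Longrightarrow> a \<in> S \<Longrightarrow> b \<in> S \<Longrightarrow> a - b \<in> S"
  using sf_add sf_uminus by (metis diff_conv_add_uminus)
lemma sf_divide: "is_subfield S \<Longrightarrow> a \<in> S \<Longrightarrow> b \<in> S \<Longrightarrow> a / b \<in> S"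
  using sf_mult sf_inverse by (metis divide_inverse)
lemma sf_power: "is_subfield S \<Longrightarrow> a \<in> S \<Longrightarrow> a ^ n \<in> S"
  by (induction n) (auto intro: sf_1 sf_mult)
lemma sf_of_nat: "is_subfield S \<Longrightarrow> of_nat n \<in> S"
  by (induction n) (auto intro: sf_0 sf_1 sf_add)
lemma sf_sum: "is_subfield S \<Longrightarrow> (\<And>i. i \<in> A \<Longrightarrow> f i \<in> S) \<Longrightarrow> sum f A \<in> S"
  by (induction A rule: infinite_finite_induct) (auto intro: sf_0 sf_add)
lemma sf_prod: "is_subfield S \<Longrightarrow> (\<And>i. i \<in> A \<Longrightarrow> f i \<in> S) \<Longrightarrow> prod f A \<in> S"
  by (induction A rule: infinite_finite_induct) (auto intro: sf_1 sf_mult)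
lemma sf_sum_list: "is_subfield S \<Longrightarrow> set xs \<subseteq> S \<Longrightarrow> sum_list xs \<in> S"
  by (induction xs) (auto intro: sf_0 sf_add)

lemma field_gen_sf: "is_subfield (field_gen A)"
  unfolding field_gen_def is_subfield_def by auto
lemma field_gen_sup: "A \<subseteq> field_gen A"
  unfolding field_gen_def by auto
lemma field_gen_min: "is_subfield S \<Longrightarrow> A \<subseteq> S \<Longrightarrow> field_gen A \<subseteq> S"
  unfolding field_gen_def by auto

lemma dfield_gen_sf: "is_subfield (dfield_gen Ds A)"
  unfolding dfield_gen_def is_subfield_def by auto
lemma dfield_gen_sup: "A \<subseteq> dfield_gen Ds A"
  unfolding dfield_gen_def by auto
lemma dfield_gen_closed: "D \<in> Ds \<Longrightarrow> y \<in> dfield_gen Ds A \<Longrightarrow> D y \<in> dfield_gen Ds A"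
  unfolding dfield_gen_def by blast
lemma dfield_gen_min: "is_subfield S \<Longrightarrow> A \<subseteq> S \<Longrightarrow> (\<And>D. D \<in> Ds \<Longrightarrow> D ` S \<subseteq> S)
   \<Longrightarrow> dfield_gen Ds A \<subseteq> S"
  unfolding dfield_gen_def by auto

section \<open>Derivations\<close>

locale deriv =
  fixes D :: "'a::field_char_0 \<Rightarrow> 'a"
  assumes der: "is_derivation D"
begin

lemma add: "D (a + b) = D a + D b" using der by (simp add: is_derivation_def)
lemma mult: "D (a * b) = a * D b + D a * b" using der by (simp add: is_derivation_def)
lemma zero[simp]: "D 0 = 0" using add[of 0 0] by simp
lemma one[simp]: "D 1 = 0" using mult[of 1 1] by simp
lemma uminus: "D (- a) = - D a" using add[of a "-a"] by (simp add: add.commute eq_neg_iff_add_eq_0)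
lemma diff: "D (a - b) = D a - D b" using add[of a "-b"] uminus[of b] by simp
lemma of_nat[simp]: "D (of_nat n) = 0"
  by (induction n) (simp_all add: add)
lemma power: "D (a ^ Suc n) = of_nat (Suc n) * a ^ n * D a"
  by (induction n) (simp_all add: mult algebra_simps)
lemma power': "D (a ^ n) = of_nat n * a ^ (n - 1) * D a"
proof (cases n)
  case (Suc m) then show ?thesis using power[of a m] by simp
qed simp
lemma inverse: "D (inverse a) = - D a / a ^ 2"
proof (cases "a = 0")
  case False
  have "0 = D (a * inverse a)" using False by simp
  also have "\<dots> = a * D (inverse a) + D a * inverse a" by (rule mult)
  finally have h: "a * D (inverse a) = - (D a * inverse a)" by (simp add: eq_neg_iff_add_eq_0)
  have "D (inverse a) = (a * D (inverse a)) / a" using False by simp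
  also have "\<dots> = - D a / a ^ 2" unfolding h using False by (simp add: power2_eq_square inverse_eq_divide)
  finally show ?thesis .
qed simp
lemma divide: "b \<noteq> 0 \<Longrightarrow> D (a / b) = (D a * b - a * D b) / b ^ 2"
proof -
  assume b: "b \<noteq> 0"
  have "D (a / b) = D (a * inverse b)" by (simp add: divide_inverse)
  also have "\<dots> = a * (- D b / b ^ 2) + D a * inverse b" by (simp add: mult inverse)
  also have "\<dots> = (D a * b - a * D b) / b ^ 2" using b by (simp add: field_simps power2_eq_square)
  finally show ?thesis .
qed
lemma sum: "D (sum f A) = (\<Sum>i\<in>A. D (f i))"
  by (induction A rule: infinite_finite_induct) (simp_all add: add)
lemma cmult: "D c = 0 \<Longrightarrow> D (c * a) = c * D a" by (simp add: mult)

lemma closed_field_gen: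
  assumes "\<And>a. a \<in> A \<Longrightarrow> D a \<in> field_gen A"
    and that: "y \<in> field_gen A"
  shows "D y \<in> field_gen A"
proof -
  let ?S = "{y \<in> field_gen A. D y \<in> field_gen A}"
  have sf: "is_subfield (field_gen A)" by (rule field_gen_sf)
  have "is_subfield ?S"
    unfolding is_subfield_def
  proof (intro conjI ballI)
    show "0 \<in> ?S" using sf_0[OF sf] by simp
    show "1 \<in> ?S" using sf_1[OF sf] sf_0[OF sf] by simp
  next
    fix a b assume a: "a \<in> ?S" and b: "b \<in> ?S"
    show "a + b \<in> ?S" using a b by (simp add: add sf_add[OF sf])
    show "a * b \<in> ?S" using a b by (simp add: mult sf_add[OF sf] sf_mult[OF sf])
  next
    fix a assume a: "a \<in> ?S"
    show "- a \<in> ?S" using a by (simp add: uminus sf_uminus[OF sf])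
    show "inverse a \<in> ?S" using a
      by (simp add: inverse sf_inverse[OF sf] sf_divide[OF sf] sf_uminus[OF sf] sf_power[OF sf])
  qed
  moreover have "A \<subseteq> ?S" using assms field_gen_sup by auto
  ultimately have "field_gen A \<subseteq> ?S" by (rule field_gen_min)
  then show ?thesis using that by auto
qed

end

locale sett =
  fixes F :: "'a::field_char_0 set" and x :: 'a and d dp :: "'a \<Rightarrow> 'a"
  assumes der_d: "is_derivation d" and der_dp: "is_derivation dp"
    and commute: "\<And>a. d (dp a) = dp (d a)"
    and F_sub: "is_subfield F" and F_dp: "dp ` F \<subseteq> F"
    and d_F: "\<And>a. a \<in> F \<Longrightarrow> d a = 0"
    and x_tr: "transcendental_over F x"
    and dx: "d x = 1" and dpx: "dp x = 0"
begin

sublocale d: deriv d by (rule deriv.intro, rule der_d)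
sublocale dp: deriv dp by (rule deriv.intro, rule der_dp)

definition K where "K = field_gen (insert x F)"

lemma K_sf: "is_subfield K" unfolding K_def by (rule field_gen_sf)
lemma F_K: "F \<subseteq> K" unfolding K_def using field_gen_sup by blast
lemma x_K: "x \<in> K" unfolding K_def using field_gen_sup by blast

lemma d_K: "a \<in> K \<Longrightarrow> d a \<in> K"
  unfolding K_def
  by (rule d.closed_field_gen) (use dx d_F field_gen_sup sf_1[OF field_gen_sf] sf_0[OF field_gen_sf] in auto)

lemma dp_K: "a \<in> K \<Longrightarrow> dp a \<in> K"
  unfolding K_def
proof (rule dp.closed_field_gen)
  fix b assume "b \<in> insert x F"
  then show "dp b \<in> field_gen (insert x F)"
    using dpx F_dp field_gen_sup[of "insert x F"] sf_0[OF field_gen_sf] by auto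
qed

lemma dp_pow_K: "a \<in> K \<Longrightarrow> (dp ^^ k) a \<in> K"
  by (induction k) (auto intro: dp_K)

lemma d_dp_pow: "d ((dp ^^ k) a) = (dp ^^ k) (d a)"
  by (induction k) (simp_all add: commute)

section \<open>Polynomials with coefficients in F\<close>

definition Fpoly :: "'a poly \<Rightarrow> bool" where
  "Fpoly P \<longleftrightarrow> (\<forall>i. coeff P i \<in> F)"

lemma Fpoly_coeff: "Fpoly P \<Longrightarrow> coeff P i \<in> F" by (simp add: Fpoly_def)
lemma Fpoly_0[simp]: "Fpoly 0" by (simp add: Fpoly_def sf_0[OF F_sub])
lemma Fpoly_const: "c \<in> F \<Longrightarrow> Fpoly [:c:]"
  by (simp add: Fpoly_def coeff_pCons sf_0[OF F_sub] split: nat.split)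
lemma Fpoly_1[simp]: "Fpoly 1" using Fpoly_const[OF sf_1[OF F_sub]] by (simp add: one_pCons)
lemma Fpoly_pCons: "Fpoly (pCons a P) \<longleftrightarrow> a \<in> F \<and> Fpoly P"
  by (auto simp: Fpoly_def coeff_pCons split: nat.split)
lemma Fpoly_X: "Fpoly [:0,1:]" by (simp add: Fpoly_pCons sf_0[OF F_sub] sf_1[OF F_sub])
lemma Fpoly_monom: "c \<in> F \<Longrightarrow> Fpoly (monom c n)"
  by (simp add: Fpoly_def coeff_monom sf_0[OF F_sub])
lemma Fpoly_add: "Fpoly P \<Longrightarrow> Fpoly Q \<Longrightarrow> Fpoly (P + Q)"
  by (simp add: Fpoly_def sf_add[OF F_sub])
lemma Fpoly_uminus: "Fpoly P \<Longrightarrow> Fpoly (- P)"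
  by (simp add: Fpoly_def sf_uminus[OF F_sub])
lemma Fpoly_diff: "Fpoly P \<Longrightarrow> Fpoly Q \<Longrightarrow> Fpoly (P - Q)"
  by (simp add: Fpoly_def sf_diff[OF F_sub])
lemma Fpoly_smult: "c \<in> F \<Longrightarrow> Fpoly P \<Longrightarrow> Fpoly (smult c P)"
  by (simp add: Fpoly_def sf_mult[OF F_sub])
lemma Fpoly_mult: "Fpoly P \<Longrightarrow> Fpoly Q \<Longrightarrow> Fpoly (P * Q)"
  unfolding Fpoly_def coeff_mult by (auto intro!: sf_sum[OF F_sub] sf_mult[OF F_sub])
lemma Fpoly_power: "Fpoly P \<Longrightarrow> Fpoly (P ^ n)"
  by (induction n) (simp_all add: Fpoly_mult)
lemma Fpoly_sum: "(\<And>i. i \<in> A \<Longrightarrow> Fpoly (f i)) \<Longrightarrow> Fpoly (sum f A)"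
  unfolding Fpoly_def coeff_sum by (auto intro!: sf_sum[OF F_sub])
lemma Fpoly_pderiv: "Fpoly P \<Longrightarrow> Fpoly (pderiv P)"
  unfolding Fpoly_def coeff_pderiv by (metis sf_mult[OF F_sub] sf_of_nat[OF F_sub])
lemma Fpoly_map_dp: "Fpoly P \<Longrightarrow> Fpoly (map_poly dp P)"
  unfolding Fpoly_def using F_dp by (auto simp: coeff_map_poly)

definition ev :: "'a poly \<Rightarrow> 'a" where "ev P = poly P x"

lemma ev_simps: "ev (P + Q) = ev P + ev Q" "ev (P * Q) = ev P * ev Q" "ev (P - Q) = ev P - ev Q"
  "ev (- P) = - ev P" "ev (smult c P) = c * ev P" "ev [:c:] = c" "ev 0 = 0" "ev 1 = 1"
  "ev (P ^ n) = ev P ^ n" "ev [:0,1:] = x"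
  by (simp_all add: ev_def poly_power)

lemma ev_sum: "ev (sum f A) = (\<Sum>i\<in>A. ev (f i))" by (simp add: ev_def poly_sum)

lemma ev_K: "Fpoly P \<Longrightarrow> ev P \<in> K"
proof (induction P)
  case (pCons a P)
  then show ?case using F_K x_K
    by (auto simp: ev_def Fpoly_pCons intro!: sf_add[OF K_sf] sf_mult[OF K_sf])
qed (simp add: ev_def sf_0[OF K_sf])

lemma d_ev: "Fpoly P \<Longrightarrow> d (ev P) = ev (pderiv P)"
proof (induction P)
  case (pCons a P)
  then have "d (ev (pCons a P)) = d a + (x * d (ev P) + d x * ev P)"
    by (simp add: ev_def d.add d.mult Fpoly_pCons)
  also have "\<dots> = ev (pderiv (pCons a P))"
    using pCons by (simp add: Fpoly_pCons d_F dx pderiv_pCons ev_def)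
  finally show ?case .
qed (simp add: ev_def)

lemma dp_ev: "Fpoly P \<Longrightarrow> dp (ev P) = ev (map_poly dp P)"
proof (induction P)
  case (pCons a P)
  then have "dp (ev (pCons a P)) = dp a + (x * dp (ev P) + dp x * ev P)"
    by (simp add: ev_def dp.add dp.mult Fpoly_pCons)
  also have "\<dots> = ev (map_poly dp (pCons a P))"
    using pCons by (simp add: Fpoly_pCons dpx map_poly_pCons ev_def)
  finally show ?case .
qed (simp add: ev_def)

lemma ev_eq_0: "Fpoly P \<Longrightarrow> ev P = 0 \<longleftrightarrow> P = 0"
proof
  assume P: "Fpoly P" and e: "ev P = 0"
  show "P = 0"
  proof (rule ccontr)
    assume nz: "P \<noteq> 0"
    let ?q = "coeffs P"
    have "(\<forall>c\<in>set ?q. c \<in> F) \<and> (\<exists>c\<in>set ?q. c \<noteq> 0)"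
    proof
      show "\<forall>c\<in>set ?q. c \<in> F" using P by (auto simp: Fpoly_def coeffs_def)
      show "\<exists>c\<in>set ?q. c \<noteq> 0" using nz
        by (metis last_coeffs_eq_coeff_degree last_in_set leading_coeff_0_iff coeffs_eq_Nil)
    qed
    then have "(\<Sum>i<length ?q. ?q ! i * x ^ i) \<noteq> 0" using x_tr by (auto simp: transcendental_over_def)
    moreover have "(\<Sum>i<length ?q. ?q ! i * x ^ i) = (\<Sum>i\<le>degree P. coeff P i * x ^ i)"
      using nz by (intro sum.cong) (auto simp: length_coeffs coeffs_nth)
    ultimately show False using e by (simp add: ev_def poly_altdef)
  qed
qed (simp add: ev_def)

end

context sett
begin

lemma Fpoly_divmod:
  assumes "Fpoly P" "Fpoly Q" "Q \<noteq> 0"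
  shows "\<exists>D R. Fpoly D \<and> Fpoly R \<and> P = Q * D + R \<and> (R = 0 \<or> degree R < degree Q)"
  using assms(1)
proof (induction "degree P" arbitrary: P rule: less_induct)
  case less
  show ?case
  proof (cases "P = 0 \<or> degree P < degree Q")
    case True
    then show ?thesis using less.prems by (intro exI[of _ 0] exI[of _ P]) auto
  next
    case False
    then have Pnz: "P \<noteq> 0" and le: "degree Q \<le> degree P" by auto
    define n where "n = degree P"
    define m where "m = degree Q"
    define c where "c = lead_coeff P / lead_coeff Q"
    have cF: "c \<in> F" unfolding c_def using less.prems assms(2)
      by (intro sf_divide[OF F_sub]) (auto simp: Fpoly_coeff)
    have cnz: "c \<noteq> 0" using Pnz assms(3) by (simp add: c_def)
    define P1 where "P1 = P - monom c (n - m) * Q"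
    have FP1: "Fpoly P1" unfolding P1_def
      using less.prems assms(2) cF by (intro Fpoly_diff Fpoly_mult Fpoly_monom)
    have dm: "degree (monom c (n - m) * Q) = n"
      using cnz assms(3) le by (simp add: degree_mult_eq degree_monom_eq n_def m_def)
    have cn: "coeff P1 n = 0"
      using le assms(3) by (simp add: P1_def coeff_monom_mult n_def m_def c_def)
    have dP1: "degree P1 \<le> n" unfolding P1_def using dm by (intro degree_diff_le) (auto simp: n_def)
    show ?thesis
    proof (cases "P1 = 0")
      case True
      then show ?thesis using cF assms(2) Fpoly_monom
        by (intro exI[of _ "monom c (n - m)"] exI[of _ 0]) (auto simp: P1_def algebra_simps)
    next
      case False
      then have "degree P1 \<noteq> n" using cn by auto
      with dP1 have "degree P1 < degree P" by (simp add: n_def)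
      from less.hyps[OF this FP1] obtain D R where DR: "Fpoly D" "Fpoly R" "P1 = Q * D + R"
        "R = 0 \<or> degree R < degree Q" by blast
      show ?thesis
        using DR cF by (intro exI[of _ "D + monom c (n - m)"] exI[of _ R])
          (auto simp: Fpoly_add Fpoly_monom P1_def algebra_simps)
    qed
  qed
qed

lemma Fpoly_dvd:
  assumes "Fpoly P" "Fpoly Q" "Q \<noteq> 0" "Q dvd P"
  shows "\<exists>D. Fpoly D \<and> P = Q * D"
proof -
  obtain D R where DR: "Fpoly D" "Fpoly R" "P = Q * D + R" "R = 0 \<or> degree R < degree Q"
    using Fpoly_divmod[OF assms(1-3)] by blast
  have "R = P - Q * D" using DR(3) by simp
  then have "Q dvd R" using assms(4) by (simp add: dvd_diff)
  have "R = 0"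
  proof (rule ccontr)
    assume "R \<noteq> 0"
    then have "degree Q \<le> degree R" using \<open>Q dvd R\<close> by (rule dvd_imp_degree_le[rotated])
    then show False using DR(4) \<open>R \<noteq> 0\<close> by simp
  qed
  then show ?thesis using DR by auto
qed

lemma pderiv_sum: "pderiv (sum f A) = (\<Sum>i\<in>A. pderiv (f i))"
  by (induction A rule: infinite_finite_induct) (simp_all add: pderiv_add)

lemma Fpoly_antideriv:
  assumes "Fpoly C"
  shows "\<exists>Q. Fpoly Q \<and> pderiv Q = C"
proof -
  define Q where "Q = (\<Sum>i\<le>degree C. monom (coeff C i / of_nat (Suc i)) (Suc i))"
  have "Fpoly Q" unfolding Q_def using assms
    by (intro Fpoly_sum Fpoly_monom sf_divide[OF F_sub] sf_of_nat[OF F_sub]) (auto simp: Fpoly_coeff)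
  moreover have "pderiv Q = C"
  proof -
    have "pderiv Q = (\<Sum>i\<le>degree C. monom (coeff C i) i)"
      unfolding Q_def pderiv_sum pderiv_monom
      by (intro sum.cong refl) (simp del: of_nat_Suc)
    also have "\<dots> = C" by (rule poly_as_sum_of_monoms)
    finally show ?thesis .
  qed
  ultimately show ?thesis by blast
qed

end

context sett
begin

definition Quot where
  "Quot = {ev A / ev B | A B. Fpoly A \<and> Fpoly B \<and> B \<noteq> 0}"

lemma Quot_sf: "is_subfield Quot"
  unfolding is_subfield_def
proof (intro conjI ballI)
  show "0 \<in> Quot" unfolding Quot_def by (rule CollectI, rule exI[of _ 0], rule exI[of _ 1]) (simp add: ev_simps)
  show "1 \<in> Quot" unfolding Quot_def by (rule CollectI, rule exI[of _ 1], rule exI[of _ 1]) (simp add: ev_simps)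
next
  fix a b assume "a \<in> Quot" "b \<in> Quot"
  then obtain A B C E where h: "Fpoly A" "Fpoly B" "B \<noteq> 0" "a = ev A / ev B"
     "Fpoly C" "Fpoly E" "E \<noteq> 0" "b = ev C / ev E" unfolding Quot_def by blast
  have nz: "ev B \<noteq> 0" "ev E \<noteq> 0" using h ev_eq_0 by auto
  show "a + b \<in> Quot" unfolding Quot_def
    apply (rule CollectI, rule exI[of _ "A * E + C * B"], rule exI[of _ "B * E"])
    using h nz unfolding h(4,8) by (simp add: Fpoly_add Fpoly_mult ev_simps add_frac_eq)
  show "a * b \<in> Quot" unfolding Quot_def
    apply (rule CollectI, rule exI[of _ "A * C"], rule exI[of _ "B * E"])
    using h nz unfolding h(4,8) by (simp add: Fpoly_add Fpoly_mult ev_simps)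
next
  fix a assume "a \<in> Quot"
  then obtain A B where h: "Fpoly A" "Fpoly B" "B \<noteq> 0" "a = ev A / ev B" unfolding Quot_def by blast
  show "- a \<in> Quot" unfolding Quot_def
    apply (rule CollectI, rule exI[of _ "- A"], rule exI[of _ "B"])
    using h by (simp add: Fpoly_uminus ev_simps)
  show "inverse a \<in> Quot"
  proof (cases "A = 0")
    case True then have "inverse a = ev 0 / ev 1" using h by (simp add: ev_simps)
    then show ?thesis unfolding Quot_def using Fpoly_0 Fpoly_1 by (metis (mono_tags, lifting) CollectI one_neq_zero)
  next
    case False
    then have "inverse a = ev B / ev A" using h by simp
    then show ?thesis unfolding Quot_def using h False by blast
  qed
qed

lemma K_Quot: "K \<subseteq> Quot"
  unfolding K_def
proof (rule field_gen_min[OF Quot_sf])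
  show "insert x F \<subseteq> Quot"
  proof
    fix a assume "a \<in> insert x F"
    then show "a \<in> Quot"
    proof
      assume "a = x" then show ?thesis unfolding Quot_def
        by (intro CollectI exI[of _ "[:0,1:]"] exI[of _ 1]) (simp add: ev_simps Fpoly_X)
    next
      assume "a \<in> F" then show ?thesis unfolding Quot_def
        by (intro CollectI exI[of _ "[:a:]"] exI[of _ 1]) (simp add: ev_simps Fpoly_const)
    qed
  qed
qed

end

lemma poly_ideal_min:
  fixes g T :: "'a::field poly"
  assumes g0: "g \<noteq> 0"
  shows "\<exists>h \<alpha> \<beta>. h = \<alpha> * g + \<beta> * T \<and> h \<noteq> 0 \<and> h dvd g \<and> h dvd T"
proof -
  define P where "P h \<longleftrightarrow> h \<noteq> 0 \<and> (\<exists>\<alpha> \<beta>. h = \<alpha> * g + \<beta> * T)" for h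
  have "P g" unfolding P_def using g0 by (intro conjI exI[of _ 1] exI[of _ 0]) auto
  then obtain h where h: "P h" and hmin: "\<And>z. P z \<Longrightarrow> degree h \<le> degree z"
    using ex_has_least_nat[of P g degree] by blast
  obtain \<alpha> \<beta> where hab: "h = \<alpha> * g + \<beta> * T" and h0: "h \<noteq> 0" using h unfolding P_def by blast
  have dv: "h dvd Y" if Y: "Y = \<gamma> * g + \<delta> * T" for Y \<gamma> \<delta>
  proof (rule ccontr)
    assume nd: "\<not> h dvd Y"
    then have r0: "Y mod h \<noteq> 0" by (simp add: mod_eq_0_iff_dvd)
    have "Y mod h = Y - h * (Y div h)" by (simp add: minus_div_mult_eq_mod[symmetric] mult.commute)
    also have "\<dots> = (\<gamma> - \<alpha> * (Y div h)) * g + (\<delta> - \<beta> * (Y div h)) * T"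
      unfolding Y hab by (simp add: algebra_simps)
    finally have "P (Y mod h)" unfolding P_def using r0 by blast
    then have "degree h \<le> degree (Y mod h)" by (rule hmin)
    moreover have "degree (Y mod h) < degree h" using degree_mod_less'[OF h0 r0] .
    ultimately show False by simp
  qed
  have "h dvd g" by (rule dv[of g 1 0]) simp
  moreover have "h dvd T" by (rule dv[of T 0 1]) simp
  ultimately show ?thesis using hab h0 by blast
qed

lemma deriv_dvd_power:
  fixes g T :: "'a::field_char_0 poly"
  assumes "g \<noteq> 0" "g dvd T * pderiv g"
  shows "g dvd T ^ degree g"
  using assms
proof (induction "degree g" arbitrary: g rule: less_induct)
  case less
  obtain h \<alpha> \<beta> where h: "h = \<alpha> * g + \<beta> * T" "h \<noteq> 0" "h dvd g" "h dvd T"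
    using poly_ideal_min[OF less.prems(1), of T] by blast
  show ?case
  proof (cases "degree h = 0")
    case True
    then have hu: "is_unit h" using is_unit_iff_degree[OF h(2)] by simp
    have "pderiv g * h = (\<alpha> * pderiv g) * g + \<beta> * (T * pderiv g)" unfolding h(1) by (simp add: algebra_simps)
    then have "g dvd pderiv g * h" using less.prems(2) by simp
    then have gd: "g dvd pderiv g" using hu by (simp add: dvd_mult_unit_iff)
    have "degree g = 0"
    proof (rule ccontr)
      assume dg: "degree g \<noteq> 0"
      then have "pderiv g \<noteq> 0" by (simp add: pderiv_eq_0_iff)
      then have "degree g \<le> degree (pderiv g)" using gd by (rule dvd_imp_degree_le[rotated])
      then show False using dg by (simp add: degree_pderiv)
    qed
    then show ?thesis using is_unit_iff_degree[OF less.prems(1)] by simp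
  next
    case False
    obtain g1 where g1: "g = h * g1" using h(3) by (elim dvdE)
    obtain T1 where T1: "T = h * T1" using h(4) by (elim dvdE)
    have g10: "g1 \<noteq> 0" using less.prems(1) g1 by auto
    have dg: "degree g = degree h + degree g1" using g1 h(2) g10 by (simp add: degree_mult_eq)
    have "h * g1 dvd h * (T1 * (h * pderiv g1 + g1 * pderiv h))"
      using less.prems(2) unfolding g1 T1 pderiv_mult by (simp add: mult_ac)
    then have "g1 dvd T1 * (h * pderiv g1 + g1 * pderiv h)" using h(2) by simp
    then have "g1 dvd T1 * h * pderiv g1 + g1 * (T1 * pderiv h)" by (simp add: algebra_simps)
    then have "g1 dvd T1 * h * pderiv g1" by (simp add: dvd_add_left_iff)
    then have "g1 dvd T * pderiv g1" unfolding T1 by (simp add: mult_ac)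
    then have ih: "g1 dvd T ^ degree g1" using less.hyps[of g1] dg False g10 by simp
    have "g dvd T * T ^ degree g1" unfolding g1 using h(4) ih by (rule mult_dvd_mono)
    also have "\<dots> dvd T ^ degree g" using dg False
      by (simp add: le_imp_power_dvd flip: power_Suc)
    finally show ?thesis .
  qed
qed

context sett
begin

lemma Fpoly_ideal_min:
  assumes S: "Fpoly S" and U: "Fpoly U" and S0: "S \<noteq> 0"
  shows "\<exists>h \<alpha> \<beta>. Fpoly \<alpha> \<and> Fpoly \<beta> \<and> h = \<alpha> * S + \<beta> * U \<and> h \<noteq> 0 \<and> h dvd S \<and> h dvd U"
proof -
  define P where "P h \<longleftrightarrow> h \<noteq> 0 \<and> (\<exists>\<alpha> \<beta>. Fpoly \<alpha> \<and> Fpoly \<beta> \<and> h = \<alpha> * S + \<beta> * U)" for h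
  have "P S" unfolding P_def using S0 by (intro conjI exI[of _ 1] exI[of _ 0]) auto
  then obtain h where h: "P h" and hmin: "\<And>z. P z \<Longrightarrow> degree h \<le> degree z"
    using ex_has_least_nat[of P S degree] by blast
  obtain \<alpha> \<beta> where ab: "Fpoly \<alpha>" "Fpoly \<beta>" and hab: "h = \<alpha> * S + \<beta> * U" and h0: "h \<noteq> 0"
    using h unfolding P_def by blast
  have Fh: "Fpoly h" unfolding hab using ab S U by (intro Fpoly_add Fpoly_mult)
  have dv: "h dvd Y" if Y: "Y = \<gamma> * S + \<delta> * U" "Fpoly \<gamma>" "Fpoly \<delta>" for Y \<gamma> \<delta>
  proof -
    have FY: "Fpoly Y" unfolding Y using Y(2,3) S U by (intro Fpoly_add Fpoly_mult)
    obtain D R where DR: "Fpoly D" "Fpoly R" "Y = h * D + R" "R = 0 \<or> degree R < degree h"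
      using Fpoly_divmod[OF FY Fh h0] by blast
    have "R = 0"
    proof (rule ccontr)
      assume r0: "R \<noteq> 0"
      have "R = Y - h * D" using DR(3) by simp
      also have "\<dots> = (\<gamma> - \<alpha> * D) * S + (\<delta> - \<beta> * D) * U"
        unfolding Y hab by (simp add: algebra_simps)
      finally have "P R" unfolding P_def using r0 Y ab DR(1)
        by (intro conjI exI[of _ "\<gamma> - \<alpha> * D"] exI[of _ "\<delta> - \<beta> * D"]) (auto intro: Fpoly_diff Fpoly_mult)
      then have "degree h \<le> degree R" by (rule hmin)
      then show False using DR(4) r0 by simp
    qed
    then show ?thesis using DR(3) by simp
  qed
  have "h dvd S" by (rule dv[of S 1 0]) auto
  moreover have "h dvd U" by (rule dv[of U 0 1]) auto
  ultimately show ?thesis using hab h0 ab by blast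
qed

lemma good_S:
  assumes FB: "Fpoly B" and B0: "B \<noteq> 0"
  shows "\<exists>S a b m. Fpoly S \<and> S \<noteq> 0 \<and> B dvd S ^ m \<and> Fpoly a \<and> Fpoly b \<and> a * S + b * pderiv S = 1"
proof -
  define P where "P S \<longleftrightarrow> Fpoly S \<and> S \<noteq> 0 \<and> (\<exists>m. B dvd S ^ m)" for S
  have "P B" unfolding P_def using FB B0 by (auto intro: exI[of _ 1])
  then obtain S where S: "P S" and Smin: "\<And>z. P z \<Longrightarrow> degree S \<le> degree z"
    using ex_has_least_nat[of P B degree] by blast
  from S have FS: "Fpoly S" and S0: "S \<noteq> 0" and "\<exists>m. B dvd S ^ m" unfolding P_def by auto
  then obtain m where Bm: "B dvd S ^ m" by blast
  obtain g \<alpha> \<beta> where g: "Fpoly \<alpha>" "Fpoly \<beta>" "g = \<alpha> * S + \<beta> * pderiv S" "g \<noteq> 0" "g dvd S" "g dvd pderiv S"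
    using Fpoly_ideal_min[OF FS Fpoly_pderiv[OF FS] S0] by blast
  have Fg: "Fpoly g" unfolding g(3) using g(1,2) FS by (intro Fpoly_add Fpoly_mult Fpoly_pderiv)
  show ?thesis
  proof (cases "degree g = 0")
    case True
    define c where "c = coeff g 0"
    have gc: "g = [:c:]" using True by (simp add: c_def degree_0_id)
    have c0: "c \<noteq> 0" using g(4) gc by auto
    have cF: "c \<in> F" using Fg by (simp add: c_def Fpoly_coeff)
    have "smult (inverse c) \<alpha> * S + smult (inverse c) \<beta> * pderiv S = smult (inverse c) g"
      unfolding g(3) by (simp add: smult_add_right)
    also have "\<dots> = 1" using gc c0 by (simp add: one_pCons)
    finally show ?thesis using FS S0 Bm g(1,2) cF
      by (intro exI[of _ S] exI[of _ "smult (inverse c) \<alpha>"] exI[of _ "smult (inverse c) \<beta>"] exI[of _ m])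
         (auto intro!: Fpoly_smult sf_inverse[OF F_sub])
  next
    case False
    obtain T where FT: "Fpoly T" and ST: "S = g * T" using Fpoly_dvd[OF FS Fg g(4) g(5)] by blast
    have T0: "T \<noteq> 0" using S0 ST by auto
    have "g dvd g * pderiv T + T * pderiv g" using g(6) unfolding ST pderiv_mult .
    then have "g dvd T * pderiv g" by (simp add: dvd_add_right_iff)
    then have "g dvd T ^ degree g" using g(4) by (rule deriv_dvd_power[rotated])
    then have "S dvd T * T ^ degree g" unfolding ST by (simp add: mult_dvd_mono mult.commute)
    then have "S ^ m dvd (T ^ Suc (degree g)) ^ m" by (simp add: dvd_power_same)
    then have "B dvd T ^ (Suc (degree g) * m)" using Bm by (metis dvd_trans power_mult)
    then have "P T" unfolding P_def using FT T0 by blast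
    then have "degree S \<le> degree T" by (rule Smin)
    moreover have "degree S = degree g + degree T" unfolding ST using g(4) T0 by (simp add: degree_mult_eq)
    ultimately show ?thesis using False by simp
  qed
qed

end

context sett
begin

lemma hermite_identity:
  assumes s0: "s \<noteq> 0" and bez: "\<alpha> * s + \<beta> * d s = 1" and N: "N \<noteq> 0"
  shows "c / s ^ Suc N = (c * \<alpha> + d (c * \<beta>) / of_nat N) / s ^ N + d (- (c * \<beta> / s ^ N) / of_nat N)"
proof -
  have dN: "d (of_nat N) = 0" by simp
  have e1: "d (c * \<beta> / s ^ N) = d (c * \<beta>) / s ^ N - of_nat N * (c * \<beta>) * d s / s ^ Suc N"
  proof -
    have "d (c * \<beta> / s ^ N) = (d (c * \<beta>) * s ^ N - c * \<beta> * (of_nat N * s ^ (N - 1) * d s)) / (s ^ N) ^ 2"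
      using s0 by (simp add: d.divide d.power')
    also have "\<dots> = d (c * \<beta>) / s ^ N - of_nat N * (c * \<beta>) * d s / s ^ Suc N"
      using s0 N by (cases N) (simp_all add: field_simps power2_eq_square)
    finally show ?thesis .
  qed
  have e2: "d (- (c * \<beta> / s ^ N) / of_nat N) = - d (c * \<beta> / s ^ N) / of_nat N"
  proof -
    have "- (c * \<beta> / s ^ N) / of_nat N = (c * \<beta> / s ^ N) * (- inverse (of_nat N))"
      by (simp add: divide_inverse)
    moreover have "d (- inverse (of_nat N)) = 0" by (simp add: d.uminus d.inverse)
    ultimately have "d (- (c * \<beta> / s ^ N) / of_nat N) = d (c * \<beta> / s ^ N) * (- inverse (of_nat N))"
      by (simp only: d.mult) simp
    then show ?thesis by (simp add: divide_inverse)
  qed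
  have "c / s ^ Suc N = c * (\<alpha> * s + \<beta> * d s) / s ^ Suc N" using bez by simp
  also have "\<dots> = (c * \<alpha> + d (c * \<beta>) / of_nat N) / s ^ N + d (- (c * \<beta> / s ^ N) / of_nat N)"
    unfolding e2 e1 using s0 N by (simp add: field_simps)
  finally show ?thesis .
qed

lemma hermite:
  assumes FS: "Fpoly S" and S0: "S \<noteq> 0" and Fa: "Fpoly a" and Fb: "Fpoly b"
    and bez: "a * S + b * pderiv S = 1"
  shows "Fpoly C \<Longrightarrow> \<exists>R w. Fpoly R \<and> (\<forall>i\<ge>degree S. coeff R i = 0) \<and> w \<in> K \<and>
            ev C / ev S ^ Suc n = ev R / ev S + d w"
proof (induction n arbitrary: C)
  case 0
  obtain D R where DR: "Fpoly D" "Fpoly R" "C = S * D + R" "R = 0 \<or> degree R < degree S"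
    using Fpoly_divmod[OF 0 FS S0] by blast
  obtain Q where Q: "Fpoly Q" "pderiv Q = D" using Fpoly_antideriv[OF DR(1)] by blast
  have s0: "ev S \<noteq> 0" using ev_eq_0[OF FS] S0 by simp
  have "ev C / ev S ^ Suc 0 = ev R / ev S + d (ev Q)"
    using s0 by (simp add: DR(3) ev_simps d_ev[OF Q(1)] Q(2) field_simps)
  moreover have "\<forall>i\<ge>degree S. coeff R i = 0" using DR(4) by (auto intro: coeff_eq_0)
  ultimately show ?case using DR(2) ev_K[OF Q(1)] by blast
next
  case (Suc n)
  have s0: "ev S \<noteq> 0" using ev_eq_0[OF FS] S0 by simp
  have b1: "ev a * ev S + ev b * d (ev S) = 1"
    using arg_cong[OF bez, of ev] by (simp add: ev_simps d_ev[OF FS])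
  define C' where "C' = C * a + smult (inverse (of_nat (Suc n))) (pderiv (C * b))"
  have FC': "Fpoly C'" unfolding C'_def using Suc.prems Fa Fb
    by (intro Fpoly_add Fpoly_mult Fpoly_smult Fpoly_pderiv sf_inverse[OF F_sub] sf_of_nat[OF F_sub])
  obtain R w where Rw: "Fpoly R" "\<forall>i\<ge>degree S. coeff R i = 0" "w \<in> K" "ev C' / ev S ^ Suc n = ev R / ev S + d w"
    using Suc.IH[OF FC'] by blast
  define w' where "w' = - (ev C * ev b / ev S ^ Suc n) / of_nat (Suc n)"
  have w'K: "w' \<in> K" unfolding w'_def using Suc.prems Fb FS
    by (intro sf_divide[OF K_sf] sf_uminus[OF K_sf] sf_mult[OF K_sf] sf_power[OF K_sf] ev_K sf_of_nat[OF K_sf])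
  have dcb: "d (ev C * ev b) = ev (pderiv (C * b))"
    using d_ev[of "C * b"] Suc.prems Fb by (simp add: Fpoly_mult ev_simps)
  have "ev C / ev S ^ Suc (Suc n) = (ev C * ev a + d (ev C * ev b) / of_nat (Suc n)) / ev S ^ Suc n + d w'"
    unfolding w'_def by (rule hermite_identity[OF s0 b1]) simp
  also have "(ev C * ev a + d (ev C * ev b) / of_nat (Suc n)) = ev C'"
    unfolding C'_def dcb by (simp add: ev_simps divide_inverse mult.commute)
  also have "ev C' / ev S ^ Suc n + d w' = ev R / ev S + d (w + w')" using Rw(4) by (simp add: d.add)
  finally show ?case using Rw(1,2) sf_add[OF K_sf Rw(3) w'K] by blast
qed

end

lemma lin_dep:
  fixes v :: "nat \<Rightarrow> nat \<Rightarrow> 'a::field"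
  assumes F: "is_subfield F"
  shows "finite I \<Longrightarrow> card I > n \<Longrightarrow> (\<forall>k\<in>I. \<forall>i. v k i \<in> F) \<Longrightarrow> (\<forall>k\<in>I. \<forall>i\<ge>n. v k i = 0) \<Longrightarrow>
    \<exists>c. (\<forall>k\<in>I. c k \<in> F) \<and> (\<exists>k\<in>I. c k \<noteq> 0) \<and> (\<forall>i. (\<Sum>k\<in>I. c k * v k i) = 0)"
proof (induction n arbitrary: I v)
  case 0
  then obtain k0 where k0: "k0 \<in> I" by (metis card.empty ex_in_conv less_irrefl)
  show ?case using 0 k0 sf_0[OF F] sf_1[OF F]
    by (intro exI[of _ "\<lambda>k. if k = k0 then 1 else 0"]) auto
next
  case (Suc n)
  show ?case
  proof (cases "\<forall>k\<in>I. v k n = 0")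
    case True
    have "\<forall>k\<in>I. \<forall>i\<ge>n. v k i = 0"
    proof (intro ballI allI impI)
      fix k i assume "k \<in> I" "n \<le> i"
      then show "v k i = 0" using True Suc.prems(4) by (cases "i = n") auto
    qed
    then show ?thesis using Suc.IH[of I v] Suc.prems by auto
  next
    case False
    then obtain k0 where k0: "k0 \<in> I" "v k0 n \<noteq> 0" by blast
    define J where "J = I - {k0}"
    define v' where "v' k i = v k i - (v k n / v k0 n) * v k0 i" for k i
    have fJ: "finite J" "card J > n" using Suc.prems(1,2) k0 by (auto simp: J_def)
    have v'F: "\<forall>k\<in>J. \<forall>i. v' k i \<in> F" unfolding v'_def J_def using Suc.prems(3) k0
      by (auto intro!: sf_diff[OF F] sf_mult[OF F] sf_divide[OF F])
    have v'0: "\<forall>k\<in>J. \<forall>i\<ge>n. v' k i = 0"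
    proof (intro ballI allI impI)
      fix k i assume k: "k \<in> J" and i: "n \<le> i"
      show "v' k i = 0"
      proof (cases "i = n")
        case True then show ?thesis using k0 by (simp add: v'_def)
      next
        case False then show ?thesis using k i k0 Suc.prems(4) by (simp add: v'_def J_def)
      qed
    qed
    obtain c' where c': "\<forall>k\<in>J. c' k \<in> F" "\<exists>k\<in>J. c' k \<noteq> 0" "\<forall>i. (\<Sum>k\<in>J. c' k * v' k i) = 0"
      using Suc.IH[OF fJ v'F v'0] by blast
    define t where "t = (\<Sum>k\<in>J. c' k * v k n) / v k0 n"
    define c where "c k = (if k = k0 then - t else c' k)" for k
    have tF: "t \<in> F" unfolding t_def using c'(1) Suc.prems(3) k0 J_def
      by (intro sf_divide[OF F] sf_sum[OF F] sf_mult[OF F]) auto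
    have "\<forall>k\<in>I. c k \<in> F" using c'(1) tF sf_uminus[OF F] by (auto simp: c_def J_def)
    moreover have "\<exists>k\<in>I. c k \<noteq> 0" using c'(2) by (auto simp: c_def J_def)
    moreover have "\<forall>i. (\<Sum>k\<in>I. c k * v k i) = 0"
    proof
      fix i
      have I: "I = insert k0 J" using k0 by (auto simp: J_def)
      have k0J: "k0 \<notin> J" by (simp add: J_def)
      have "(\<Sum>k\<in>I. c k * v k i) = c k0 * v k0 i + (\<Sum>k\<in>J. c k * v k i)"
        unfolding I using fJ(1) k0J by (simp add: sum.insert)
      also have "(\<Sum>k\<in>J. c k * v k i) = (\<Sum>k\<in>J. c' k * v k i)"
        using k0J by (intro sum.cong) (auto simp: c_def)
      also have "c k0 = - t" by (simp add: c_def)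
      also have "(\<Sum>k\<in>J. c' k * v k i) = (\<Sum>k\<in>J. c' k * v' k i) + t * v k0 i"
      proof -
        have "(\<Sum>k\<in>J. c' k * v' k i) = (\<Sum>k\<in>J. c' k * v k i - (c' k * v k n) * (v k0 i / v k0 n))"
          unfolding v'_def by (intro sum.cong) (simp_all add: algebra_simps)
        also have "\<dots> = (\<Sum>k\<in>J. c' k * v k i) - t * v k0 i"
          unfolding t_def sum_subtractf by (simp add: sum_distrib_right[symmetric] sum_divide_distrib[symmetric])
        finally show ?thesis by simp
      qed
      finally show "(\<Sum>k\<in>I. c k * v k i) = 0" using c'(3) by simp
    qed
    ultimately show ?thesis by blast
  qed
qed

definition mon :: "nat \<Rightarrow> (nat \<Rightarrow> 'a::field) \<Rightarrow> (nat \<Rightarrow> nat) \<Rightarrow> 'a" where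
  "mon n f e = (\<Prod>i<n. f i ^ e i)"

definition val :: "nat \<Rightarrow> (nat \<Rightarrow> 'a::field) \<Rightarrow> ('a \<times> (nat \<Rightarrow> nat)) list \<Rightarrow> 'a" where
  "val n f L = sum_list (map (\<lambda>(c, e). c * mon n f e) L)"

inductive_set PV :: "'a::field set \<Rightarrow> (nat \<Rightarrow> 'a) \<Rightarrow> nat \<Rightarrow> 'a set" for K f m where
  PV_const: "c \<in> K \<Longrightarrow> c \<in> PV K f m"
| PV_var: "i < m \<Longrightarrow> f i \<in> PV K f m"
| PV_add: "a \<in> PV K f m \<Longrightarrow> b \<in> PV K f m \<Longrightarrow> a + b \<in> PV K f m"
| PV_mult: "a \<in> PV K f m \<Longrightarrow> b \<in> PV K f m \<Longrightarrow> a * b \<in> PV K f m"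

lemma PV_mono: "a \<in> PV K f m \<Longrightarrow> m \<le> m' \<Longrightarrow> a \<in> PV K f m'"
  by (induction rule: PV.induct) (auto intro: PV.intros)

lemma PV_uminus: "is_subfield K \<Longrightarrow> a \<in> PV K f m \<Longrightarrow> - a \<in> PV K f m"
  using PV_mult[OF PV_const[OF sf_uminus[OF _ sf_1]]] by fastforce

lemma PV_diff: "is_subfield K \<Longrightarrow> a \<in> PV K f m \<Longrightarrow> b \<in> PV K f m \<Longrightarrow> a - b \<in> PV K f m"
  using PV_add PV_uminus by (metis diff_conv_add_uminus)

lemma PV_power: "is_subfield K \<Longrightarrow> a \<in> PV K f m \<Longrightarrow> a ^ n \<in> PV K f m"
  by (induction n) (auto intro: PV.intros sf_1)

lemma PV_sum: "is_subfield K \<Longrightarrow> (\<And>i. i \<in> A \<Longrightarrow> g i \<in> PV K f m) \<Longrightarrow> sum g A \<in> PV K f m"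
  by (induction A rule: infinite_finite_induct) (auto intro: PV.intros sf_0)

lemma PV_deriv:
  assumes "is_derivation D" "\<And>c. c \<in> K \<Longrightarrow> D c \<in> K" "\<And>i. D (f i) = f (Suc i)"
  shows "a \<in> PV K f m \<Longrightarrow> D a \<in> PV K f (Suc m)"
proof (induction rule: PV.induct)
  case (PV_add a b)
  then show ?case using assms(1) by (simp add: is_derivation_def PV.PV_add)
next
  case (PV_mult a b)
  have "a \<in> PV K f (Suc m)" "b \<in> PV K f (Suc m)" using PV_mult.hyps by (auto intro: PV_mono)
  then show ?case using PV_mult.IH assms(1) by (simp add: is_derivation_def PV.PV_add PV.PV_mult)
qed (auto intro: PV.intros assms(2) simp: assms(3))

lemma mon_add: "mon n f (\<lambda>i. e1 i + e2 i) = mon n f e1 * mon n f e2"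
  unfolding mon_def by (simp add: power_add prod.distrib)

lemma mon_zero: "mon n f (\<lambda>_. 0) = 1" unfolding mon_def by simp

lemma mon_var: "i < n \<Longrightarrow> mon n f (\<lambda>j. if j = i then 1 else 0) = f i"
proof -
  assume i: "i < n"
  have "mon n f (\<lambda>j. if j = i then 1 else 0) = (\<Prod>j<n. if j = i then f j else 1)"
    unfolding mon_def by (intro prod.cong) auto
  also have "\<dots> = f i" using i by (simp add: prod.delta)
  finally show ?thesis .
qed

lemma val_append: "val n f (L1 @ L2) = val n f L1 + val n f L2"
  by (simp add: val_def)

definition lmult where
  "lmult L1 L2 = concat (map (\<lambda>(c1, e1). map (\<lambda>(c2, e2). (c1 * c2, \<lambda>i. e1 i + e2 i)) L2) L1)"

lemma val_lmult: "val n f (lmult L1 L2) = val n f L1 * val n f L2"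
proof (induction L1)
  case Nil then show ?case by (simp add: lmult_def val_def)
next
  case (Cons p L1)
  obtain c1 e1 where p: "p = (c1, e1)" by (cases p)
  have "val n f (map (\<lambda>(c2, e2). (c1 * c2, \<lambda>i. e1 i + e2 i)) L2) = c1 * mon n f e1 * val n f L2"
    by (induction L2) (auto simp: val_def mon_add algebra_simps)
  then show ?case using Cons by (simp add: lmult_def p val_append[symmetric]) (simp add: val_def algebra_simps)
qed

definition good :: "'a::field set \<Rightarrow> nat \<Rightarrow> ('a \<times> (nat \<Rightarrow> nat)) list \<Rightarrow> bool" where
  "good K m L \<longleftrightarrow> (\<forall>(c, e)\<in>set L. c \<in> K \<and> (\<forall>i\<ge>m. e i = 0))"

lemma PV_rep:
  assumes K: "is_subfield K"
  shows "a \<in> PV K f m \<Longrightarrow> m \<le> n \<Longrightarrow> \<exists>L. good K m L \<and> a = val n f L"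
proof (induction rule: PV.induct)
  case (PV_const c)
  then show ?case by (intro exI[of _ "[(c, \<lambda>_. 0)]"]) (simp add: good_def val_def mon_zero)
next
  case (PV_var i)
  then show ?case using K
    by (intro exI[of _ "[(1, \<lambda>j. if j = i then 1 else 0)]"]) (auto simp: good_def val_def mon_var sf_1)
next
  case (PV_add a b)
  then obtain L1 L2 where "good K m L1" "a = val n f L1" "good K m L2" "b = val n f L2" by blast
  then show ?case by (intro exI[of _ "L1 @ L2"]) (auto simp: good_def val_append)
next
  case (PV_mult a b)
  then obtain L1 L2 where L: "good K m L1" "a = val n f L1" "good K m L2" "b = val n f L2" by blast
  have "good K m (lmult L1 L2)" using L(1,3) K
    by (fastforce simp: good_def lmult_def intro: sf_mult)
  then show ?case using L by (intro exI[of _ "lmult L1 L2"]) (simp add: val_lmult)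
qed

definition cf :: "('a::field \<times> (nat \<Rightarrow> nat)) list \<Rightarrow> (nat \<Rightarrow> nat) \<Rightarrow> 'a" where
  "cf L e = sum_list (map fst (filter (\<lambda>p. snd p = e) L))"

lemma cf_notin: "e \<notin> snd ` set L \<Longrightarrow> cf L e = 0"
  by (induction L) (auto simp: cf_def)

lemma val_group: "val n f L = (\<Sum>e\<in>snd ` set L. cf L e * mon n f e)"
proof (induction L)
  case Nil then show ?case by (simp add: val_def)
next
  case (Cons p L)
  obtain c0 e0 where p: "p = (c0, e0)" by (cases p)
  let ?E = "snd ` set L"
  have cfc: "cf (p # L) e = (if e = e0 then c0 else 0) + cf L e" for e
    by (simp add: cf_def p)
  have "(\<Sum>e\<in>snd ` set (p # L). cf (p # L) e * mon n f e)
      = (\<Sum>e\<in>insert e0 ?E. (if e = e0 then c0 else 0) * mon n f e) + (\<Sum>e\<in>insert e0 ?E. cf L e * mon n f e)"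
    unfolding cfc by (simp add: p distrib_right sum.distrib)
  also have "(\<Sum>e\<in>insert e0 ?E. (if e = e0 then c0 else 0) * mon n f e) = (\<Sum>e\<in>insert e0 ?E. if e = e0 then c0 * mon n f e else 0)"
    by (intro sum.cong) auto
  also have "\<dots> = c0 * mon n f e0"
    by (simp add: sum.delta)
  also have "(\<Sum>e\<in>insert e0 ?E. cf L e * mon n f e) = (\<Sum>e\<in>?E. cf L e * mon n f e)"
    by (cases "e0 \<in> ?E") (simp_all add: insert_absorb cf_notin)
  finally show ?case using Cons by (simp add: p val_def)
qed

lemma alg_dep_from_list:
  assumes K: "is_subfield K" and g: "good K n L" and v: "val n f L = 0" and c: "cf L e0 \<noteq> 0"
  shows "alg_dependent K f n"
proof -
  define S where "S = {e \<in> snd ` set L. cf L e \<noteq> 0}"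
  have e0: "e0 \<in> S" using c cf_notin unfolding S_def by blast
  have "finite S" unfolding S_def by simp
  moreover have "S \<noteq> {}" using e0 by auto
  moreover have "\<forall>e\<in>S. \<forall>i\<ge>n. e i = 0" using g unfolding S_def good_def by auto
  moreover have "\<forall>e\<in>S. cf L e \<in> K \<and> cf L e \<noteq> 0"
  proof
    fix e assume "e \<in> S"
    have "\<forall>p\<in>set L. fst p \<in> K" using g by (auto simp: good_def)
    then have "cf L e \<in> K" unfolding cf_def by (intro sf_sum_list[OF K]) auto
    then show "cf L e \<in> K \<and> cf L e \<noteq> 0" using \<open>e \<in> S\<close> by (simp add: S_def)
  qed
  moreover have "(\<Sum>e\<in>S. cf L e * (\<Prod>i<n. f i ^ e i)) = 0"
  proof -
    have "(\<Sum>e\<in>S. cf L e * mon n f e) = (\<Sum>e\<in>snd ` set L. cf L e * mon n f e)"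
      unfolding S_def by (rule sum.mono_neutral_left) auto
    then show ?thesis using v val_group[of n f L] by (simp add: mon_def)
  qed
  ultimately show ?thesis unfolding alg_dependent_def by blast
qed

context sett
begin

lemma dp_pow_quot:
  assumes FA: "Fpoly A" and FB: "Fpoly B" and B0: "B \<noteq> 0"
  shows "\<exists>C. Fpoly C \<and> (dp ^^ k) (ev A / ev B) = ev C / ev B ^ Suc k"
proof (induction k)
  case 0 then show ?case using FA by auto
next
  case (Suc k)
  then obtain C where C: "Fpoly C" "(dp ^^ k) (ev A / ev B) = ev C / ev B ^ Suc k" by blast
  have b0: "ev B \<noteq> 0" using ev_eq_0[OF FB] B0 by simp
  define C' where "C' = map_poly dp C * B - smult (of_nat (Suc k)) (C * map_poly dp B)"
  have FC': "Fpoly C'" unfolding C'_def using C(1) FB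
    by (intro Fpoly_diff Fpoly_mult Fpoly_smult Fpoly_map_dp sf_of_nat[OF F_sub])
  have "(dp ^^ Suc k) (ev A / ev B) = dp (ev C / ev B ^ Suc k)" using C(2) by simp
  also have "\<dots> = (dp (ev C) * ev B ^ Suc k - ev C * (of_nat (Suc k) * ev B ^ k * dp (ev B))) / (ev B ^ Suc k) ^ 2"
    using b0 by (simp add: dp.divide dp.power del: power_Suc)
  also have "\<dots> = ev C' / ev B ^ Suc (Suc k)"
    unfolding C'_def using b0 by (simp add: ev_simps dp_ev[OF C(1)] dp_ev[OF FB] field_simps power2_eq_square)
  finally show ?case using FC' by blast
qed

lemma relation:
  assumes p_K: "p \<in> K" and Mc: "\<And>a. d a = 0 \<Longrightarrow> a \<in> K"
    and du: "d u = p * u" and u0: "u \<noteq> 0"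
  shows "\<exists>N c Y. (\<forall>k. c k \<in> F) \<and> c N \<noteq> 0 \<and> Y \<in> K \<and> (\<Sum>k\<le>N. c k * (dp ^^ k) (dp u / u)) = Y"
proof -
  define v where "v = dp u / u"
  have dv: "d v = dp p"
  proof -
    have "d v = (d (dp u) * u - dp u * d u) / u ^ 2" unfolding v_def using u0 by (rule d.divide)
    also have "d (dp u) = p * dp u + dp p * u" by (simp add: commute du dp.mult)
    finally show ?thesis using u0 by (simp add: du field_simps power2_eq_square)
  qed
  have dvk: "d ((dp ^^ k) v) = (dp ^^ Suc k) p" for k
    by (simp add: d_dp_pow dv funpow_swap1)
  obtain A B where AB: "Fpoly A" "Fpoly B" "B \<noteq> 0" "p = ev A / ev B"
    using K_Quot p_K unfolding Quot_def by blast
  obtain S a b m where S: "Fpoly S" "S \<noteq> 0" "B dvd S ^ m" "Fpoly a" "Fpoly b" "a * S + b * pderiv S = 1"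
    using good_S[OF AB(2,3)] by blast
  obtain E where E: "Fpoly E" "S ^ m = B * E" using Fpoly_dvd[OF Fpoly_power[OF S(1)] AB(2,3) S(3)] by blast
  have s0: "ev S \<noteq> 0" using ev_eq_0[OF S(1)] S(2) by simp
  have b0: "ev B \<noteq> 0" using ev_eq_0[OF AB(2)] AB(3) by simp
  have "\<forall>k. \<exists>R w. Fpoly R \<and> (\<forall>i\<ge>degree S. coeff R i = 0) \<and> w \<in> K \<and>
          (dp ^^ Suc k) p = ev R / ev S + d w"
  proof
    fix k
    obtain C where C: "Fpoly C" "(dp ^^ Suc k) p = ev C / ev B ^ Suc (Suc k)"
      using dp_pow_quot[OF AB(1-3), of "Suc k"] AB(4) by blast
    define j where "j = Suc (Suc k)"
    have hBE: "ev B ^ j * ev E ^ j = ev S ^ (m * j)"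
      using arg_cong[OF E(2), of "\<lambda>X. ev X ^ j"] by (simp add: ev_simps power_mult[symmetric] power_mult_distrib)
    have eE: "ev E ^ j \<noteq> 0"
    proof
      assume h0: "ev E ^ j = 0"
      have "ev S ^ (m * j) = ev B ^ j * ev E ^ j" using hBE by simp
      also have "\<dots> = 0" by (simp only: h0 mult_zero_right)
      finally have "ev S ^ (m * j) = 0" .
      then show False using s0 by simp
    qed
    have "ev (C * E ^ j * S) / ev S ^ Suc (m * j) = ev C * ev E ^ j / ev S ^ (m * j)"
      using s0 by (simp add: ev_simps)
    also have "\<dots> = ev C / ev B ^ j" unfolding hBE[symmetric] using eE by simp
    finally have "(dp ^^ Suc k) p = ev (C * E ^ j * S) / ev S ^ Suc (m * j)"
      using C(2) unfolding j_def by simp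
    moreover have "Fpoly (C * E ^ j * S)" using C(1) E(1) S(1) by (intro Fpoly_mult Fpoly_power)
    ultimately show "\<exists>R w. Fpoly R \<and> (\<forall>i\<ge>degree S. coeff R i = 0) \<and> w \<in> K \<and>
          (dp ^^ Suc k) p = ev R / ev S + d w"
      using hermite[OF S(1,2,4,5,6)] by metis
  qed
  then obtain R w where Rw: "\<And>k. Fpoly (R k)" "\<And>k i. i \<ge> degree S \<Longrightarrow> coeff (R k) i = 0"
    "\<And>k. w k \<in> K" "\<And>k. (dp ^^ Suc k) p = ev (R k) / ev S + d (w k)"
    by metis
  define n where "n = degree S"
  obtain c where c: "\<forall>k\<in>{..n}. c k \<in> F" "\<exists>k\<in>{..n}. c k \<noteq> 0"
      "\<forall>i. (\<Sum>k\<in>{..n}. c k * coeff (R k) i) = 0"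
    using lin_dep[OF F_sub, of "{..n}" n "\<lambda>k i. coeff (R k) i"] Rw(1,2) by (auto simp: n_def Fpoly_coeff)
  define c' where "c' k = (if k \<le> n then c k else 0)" for k
  have c'F: "c' k \<in> F" for k using c(1) sf_0[OF F_sub] by (simp add: c'_def)
  have polysum: "(\<Sum>k\<le>n. smult (c' k) (R k)) = 0"
    by (rule poly_eqI) (use c(3) in \<open>simp add: coeff_sum c'_def\<close>)
  define z where "z = (\<Sum>k\<le>n. c' k * (dp ^^ k) v) - (\<Sum>k\<le>n. c' k * w k)"
  have e: "d ((dp ^^ k) v) = ev (R k) / ev S + d (w k)" for k by (simp only: dvk Rw(4))
  have "d z = (\<Sum>k\<le>n. c' k * d ((dp ^^ k) v)) - (\<Sum>k\<le>n. c' k * d (w k))"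
    unfolding z_def using c'F d_F by (simp add: d.diff d.sum d.cmult)
  also have "\<dots> = (\<Sum>k\<le>n. c' k * ev (R k) / ev S)"
    unfolding e by (simp add: distrib_left sum.distrib)
  also have "\<dots> = ev (\<Sum>k\<le>n. smult (c' k) (R k)) / ev S"
    by (simp add: ev_sum ev_simps sum_divide_distrib)
  also have "\<dots> = 0" by (simp add: polysum ev_simps)
  finally have "z \<in> K" by (rule Mc)
  then have YK: "(\<Sum>k\<le>n. c' k * (dp ^^ k) v) \<in> K"
  proof -
    have "(\<Sum>k\<le>n. c' k * w k) \<in> K" using Rw(3) c'F F_K
      by (intro sf_sum[OF K_sf] sf_mult[OF K_sf]) auto
    then have "z + (\<Sum>k\<le>n. c' k * w k) \<in> K" using \<open>z \<in> K\<close> by (rule sf_add[OF K_sf, rotated])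
    then show ?thesis unfolding z_def by simp
  qed
  define N where "N = Max {k \<in> {..n}. c k \<noteq> 0}"
  have fin: "finite {k \<in> {..n}. c k \<noteq> 0}" "{k \<in> {..n}. c k \<noteq> 0} \<noteq> {}" using c(2) by auto
  have N: "N \<le> n" "c N \<noteq> 0" using Max_in[OF fin] by (auto simp: N_def)
  have Nmax: "c' k = 0" if "N < k" for k
  proof (cases "k \<le> n")
    case True
    have "c k = 0"
    proof (rule ccontr)
      assume "c k \<noteq> 0"
      then have "k \<le> N" unfolding N_def using True by (intro Max_ge[OF fin(1)]) auto
      then show False using that by simp
    qed
    then show ?thesis by (simp add: c'_def)
  qed (simp add: c'_def)
  have "(\<Sum>k\<le>n. c' k * (dp ^^ k) v) = (\<Sum>k\<le>N. c' k * (dp ^^ k) v)"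
    using N(1) Nmax by (intro sum.mono_neutral_right) auto
  moreover have "c' N \<noteq> 0" using N by (simp add: c'_def)
  ultimately show ?thesis using YK c'F unfolding v_def by metis
qed

end

context sett
begin

lemma dvk:
  assumes du: "d u = p * u" and u0: "u \<noteq> 0"
  shows "d ((dp ^^ k) (dp u / u)) = (dp ^^ Suc k) p"
proof -
  have dv: "d (dp u / u) = dp p"
  proof -
    have "d (dp u / u) = (d (dp u) * u - dp u * d u) / u ^ 2" using u0 by (rule d.divide)
    also have "d (dp u) = p * dp u + dp p * u" by (simp add: commute du dp.mult)
    finally show ?thesis using u0 by (simp add: du field_simps power2_eq_square)
  qed
  show ?thesis by (simp add: d_dp_pow dv funpow_swap1)
qed

lemma fin_gen:
  assumes p_K: "p \<in> K" and du: "d u = p * u" and u0: "u \<noteq> 0"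
    and cF: "\<forall>k. c k \<in> F" and cN: "c N \<noteq> 0" and YK: "Y \<in> K"
    and rel: "(\<Sum>k\<le>N. c k * (dp ^^ k) (dp u / u)) = Y"
  shows "\<exists>G. finite G \<and> dfield_gen {d, dp} (insert u K) = field_gen (K \<union> G)"
proof -
  define v where "v k = (dp ^^ k) (dp u / u)" for k
  define G where "G = insert u (v ` {..<N})"
  define \<Phi> where "\<Phi> = field_gen (K \<union> G)"
  have sf: "is_subfield \<Phi>" unfolding \<Phi>_def by (rule field_gen_sf)
  have KP: "K \<subseteq> \<Phi>" and uP: "u \<in> \<Phi>" and vP: "\<And>k. k < N \<Longrightarrow> v k \<in> \<Phi>"
    unfolding \<Phi>_def G_def using field_gen_sup[of "K \<union> insert u (v ` {..<N})"] by auto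
  have vN: "v N \<in> \<Phi>"
  proof -
    have "Y = c N * v N + (\<Sum>k<N. c k * v k)"
      using rel by (simp add: v_def lessThan_Suc_atMost[symmetric] sum.lessThan_Suc add.commute)
    then have "v N = (Y - (\<Sum>k<N. c k * v k)) / c N" using cN by (simp add: field_simps)
    moreover have "(\<Sum>k<N. c k * v k) \<in> \<Phi>" using vP cF F_K KP
      by (intro sf_sum[OF sf] sf_mult[OF sf]) auto
    ultimately show ?thesis using YK KP cF F_K
      by (metis sf_diff[OF sf] sf_divide[OF sf] subsetD)
  qed
  have vle: "v k \<in> \<Phi>" if "k \<le> N" for k
    using that vP vN by (cases "k = N") auto
  have dP: "d y \<in> \<Phi>" if "y \<in> \<Phi>" for y
    using that unfolding \<Phi>_def
  proof (rule d.closed_field_gen[rotated])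
    fix a assume a: "a \<in> K \<union> G"
    show "d a \<in> field_gen (K \<union> G)"
    proof -
      { assume "a \<in> K" then have ?thesis using d_K KP unfolding \<Phi>_def by auto }
      moreover { assume "a = u" then have ?thesis using du uP KP p_K sf_mult[OF sf] unfolding \<Phi>_def by auto }
      moreover { assume "a \<in> v ` {..<N}"
        then obtain k where "a = v k" by blast
        then have "d a = (dp ^^ Suc k) p" using dvk[OF du u0] by (simp add: v_def)
        moreover have "(dp ^^ Suc k) p \<in> \<Phi>" using dp_pow_K[OF p_K, of "Suc k"] KP by blast
        ultimately have ?thesis unfolding \<Phi>_def by simp }
      ultimately show ?thesis using a unfolding G_def by blast
    qed
  qed
  have dpP: "dp y \<in> \<Phi>" if "y \<in> \<Phi>" for y
    using that unfolding \<Phi>_def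
  proof (rule dp.closed_field_gen[rotated])
    fix a assume a: "a \<in> K \<union> G"
    show "dp a \<in> field_gen (K \<union> G)"
    proof -
      { assume "a \<in> K" then have ?thesis using dp_K KP unfolding \<Phi>_def by auto }
      moreover { assume "a = u"
        then have "dp a = v 0 * u" using u0 by (simp add: v_def)
        then have ?thesis using vle[of 0] uP sf_mult[OF sf] unfolding \<Phi>_def by auto }
      moreover { assume "a \<in> v ` {..<N}"
        then obtain k where "a = v k" "k < N" by blast
        then have "dp a = v (Suc k)" "Suc k \<le> N" by (simp_all add: v_def)
        then have ?thesis using vle unfolding \<Phi>_def by auto }
      ultimately show ?thesis using a unfolding G_def by blast
    qed
  qed
  let ?L = "dfield_gen {d, dp} (insert u K)"
  have "?L \<subseteq> \<Phi>"
  proof (rule dfield_gen_min[OF sf])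
    show "insert u K \<subseteq> \<Phi>" using KP uP by blast
  next
    fix D assume "D \<in> {d, dp}"
    then show "D ` \<Phi> \<subseteq> \<Phi>" using dP dpP by blast
  qed
  moreover have "\<Phi> \<subseteq> ?L"
    unfolding \<Phi>_def
  proof (rule field_gen_min[OF dfield_gen_sf])
    have Lsup: "insert u K \<subseteq> ?L" by (rule dfield_gen_sup)
    have vL: "v k \<in> ?L" for k
    proof (induction k)
      case 0
      have uL: "u \<in> ?L" using Lsup by blast
      have "dp u \<in> ?L" by (rule dfield_gen_closed[OF _ uL]) simp
      moreover have "v 0 = dp u / u" by (simp add: v_def)
      ultimately show ?case using sf_divide[OF dfield_gen_sf _ uL] by simp
    next
      case (Suc k)
      have "v (Suc k) = dp (v k)" by (simp add: v_def)
      moreover have "dp (v k) \<in> ?L" by (rule dfield_gen_closed[OF _ Suc.IH]) simp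
      ultimately show ?case by simp
    qed
    show "K \<union> G \<subseteq> ?L" unfolding G_def using Lsup vL by blast
  qed
  ultimately have "?L = field_gen (K \<union> G)" unfolding \<Phi>_def by (rule subset_antisym)
  moreover have "finite G" unfolding G_def by simp
  ultimately show ?thesis by blast
qed

end

context sett
begin

lemma not_dtrans:
  assumes du: "d u = p * u" and u0: "u \<noteq> 0"
    and cF: "\<forall>k. c k \<in> F" and cN: "c N \<noteq> 0" and YK: "Y \<in> K"
    and rel: "(\<Sum>k\<le>N. c k * (dp ^^ k) (dp u / u)) = Y"
  shows "\<not> d_transcendental K dp u"
proof -
  define f where "f i = (dp ^^ i) u" for i
  define v where "v k = (dp ^^ k) (dp u / u)" for k
  define Q where "Q k = u ^ Suc k * v k" for k
  have f0: "f 0 = u" and fS: "\<And>i. f (Suc i) = dp (f i)" by (simp_all add: f_def)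
  have Ksf: "is_subfield K" by (rule K_sf)
  have PVd: "a \<in> PV K f m \<Longrightarrow> dp a \<in> PV K f (Suc m)" for a m
    by (rule PV_deriv[OF der_dp dp_K]) (simp_all add: fS)
  have uPV: "u \<in> PV K f (Suc m)" for m
  proof -
    have "f 0 \<in> PV K f (Suc m)" by (rule PV_var) simp
    then show ?thesis by (simp add: f0)
  qed
  have Qrec: "Q (Suc k) = u * dp (Q k) - of_nat (Suc k) * f 1 * Q k" for k
  proof -
    have "dp (Q k) = u ^ Suc k * v (Suc k) + of_nat (Suc k) * u ^ k * dp u * v k"
      unfolding Q_def by (simp add: dp.mult dp.power v_def del: power_Suc)
    then show ?thesis by (simp add: Q_def f_def algebra_simps)
  qed
  have Qform: "\<exists>H. H \<in> PV K f (Suc k) \<and> Q k = u ^ k * f (Suc k) + H" for k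
  proof (induction k)
    case 0
    have "Q 0 = f 1" using u0 by (simp add: Q_def v_def f_def)
    then show ?case using PV_const[OF sf_0[OF Ksf], of f 1] by (intro exI[of _ 0]) simp
  next
    case (Suc k)
    then obtain H where H: "H \<in> PV K f (Suc k)" "Q k = u ^ k * f (Suc k) + H" by blast
    define H' where "H' = u * dp (u ^ k) * f (Suc k) + u * dp H - of_nat (Suc k) * f 1 * Q k"
    have "Q (Suc k) = u * dp (u ^ k * f (Suc k) + H) - of_nat (Suc k) * f 1 * Q k"
      unfolding Qrec H(2) ..
    also have "\<dots> = u ^ Suc k * f (Suc (Suc k)) + H'"
      unfolding H'_def by (simp add: dp.add dp.mult fS algebra_simps)
    finally have eq: "Q (Suc k) = u ^ Suc k * f (Suc (Suc k)) + H'" .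
    let ?m = "Suc (Suc k)"
    have "u ^ k \<in> PV K f (Suc 0)" using PV_power[OF Ksf uPV[of 0]] .
    then have "dp (u ^ k) \<in> PV K f (Suc (Suc 0))" by (rule PVd)
    then have a1: "dp (u ^ k) \<in> PV K f ?m" by (rule PV_mono) simp
    have a2: "f (Suc k) \<in> PV K f ?m" by (rule PV_var) simp
    have a3: "dp H \<in> PV K f ?m" using PVd[OF H(1)] .
    have a4: "f 1 \<in> PV K f ?m" by (rule PV_var) simp
    have a5: "Q k \<in> PV K f ?m" unfolding H(2)
      by (rule PV_add[OF PV_mult[OF PV_power[OF Ksf uPV] a2] PV_mono[OF H(1)]]) simp
    have "H' \<in> PV K f ?m" unfolding H'_def
      by (rule PV_diff[OF Ksf PV_add[OF PV_mult[OF PV_mult[OF uPV a1] a2] PV_mult[OF uPV a3]]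
            PV_mult[OF PV_mult[OF PV_const[OF sf_of_nat[OF Ksf]] a4] a5]])
    then show ?case using eq by blast
  qed
  obtain H where H: "H \<in> PV K f (Suc N)" "Q N = u ^ N * f (Suc N) + H" using Qform by blast
  have cK: "c k \<in> K" for k using cF F_K by auto
  have "u ^ Suc N * Y = (\<Sum>k\<le>N. c k * (u ^ (N - k) * Q k))"
    unfolding rel[symmetric] sum_distrib_left
  proof (intro sum.cong refl)
    fix k assume "k \<in> {..N}"
    then have e: "u ^ Suc N = u ^ (N - k) * u ^ Suc k" by (simp add: power_add[symmetric])
    show "u ^ Suc N * (c k * (dp ^^ k) (dp u / u)) = c k * (u ^ (N - k) * Q k)"
      unfolding Q_def v_def e by (simp only: mult_ac)
  qed
  also have "\<dots> = c N * Q N + (\<Sum>k<N. c k * (u ^ (N - k) * Q k))"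
    by (simp add: lessThan_Suc_atMost[symmetric] sum.lessThan_Suc)
  finally have eq0: "c N * (u ^ N * f (Suc N)) + (c N * H + (\<Sum>k<N. c k * (u ^ (N - k) * Q k)) - u ^ Suc N * Y) = 0"
    unfolding H(2) by (simp add: algebra_simps)
  define Hf where "Hf = c N * H + (\<Sum>k<N. c k * (u ^ (N - k) * Q k)) - u ^ Suc N * Y"
  have HfPV: "Hf \<in> PV K f (Suc N)"
  proof -
    have "Q k \<in> PV K f (Suc N)" if "k < N" for k
    proof -
      obtain H1 where H1: "H1 \<in> PV K f (Suc k)" "Q k = u ^ k * f (Suc k) + H1" using Qform by blast
      have "f (Suc k) \<in> PV K f (Suc N)" using that by (intro PV_var) simp
      moreover have "H1 \<in> PV K f (Suc N)" by (rule PV_mono[OF H1(1)]) (use that in simp)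
      ultimately show ?thesis unfolding H1(2) by (intro PV_add PV_mult PV_power[OF Ksf uPV])
    qed
    then have S: "(\<Sum>k<N. c k * (u ^ (N - k) * Q k)) \<in> PV K f (Suc N)"
      by (intro PV_sum[OF Ksf] PV_mult[OF PV_const[OF cK]] PV_mult[OF PV_power[OF Ksf uPV]]) auto
    show ?thesis unfolding Hf_def
      by (rule PV_diff[OF Ksf PV_add[OF PV_mult[OF PV_const[OF cK] H(1)] S]
           PV_mult[OF PV_power[OF Ksf uPV] PV_const[OF YK]]])
  qed
  define n where "n = Suc (Suc N)"
  obtain LH where LH: "good K (Suc N) LH" "Hf = val n f LH"
    using PV_rep[OF Ksf HfPV, of n] by (auto simp: n_def)
  define es where "es = (\<lambda>i. if i = 0 then N else if i = Suc N then 1 else (0::nat))"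
  define L where "L = (c N, es) # LH"
  have mes: "mon n f es = u ^ N * f (Suc N)"
  proof -
    have "es = (\<lambda>i. (\<lambda>i. if i = 0 then N else 0) i + (\<lambda>i. if i = Suc N then 1 else 0) i)"
      by (auto simp: es_def)
    then have "mon n f es = mon n f (\<lambda>i. if i = 0 then N else 0) * mon n f (\<lambda>i. if i = Suc N then 1 else 0)"
      by (simp only: mon_add)
    also have "mon n f (\<lambda>i. if i = Suc N then 1 else 0) = f (Suc N)" by (rule mon_var) (simp add: n_def)
    also have "mon n f (\<lambda>i. if i = 0 then N else 0) = (\<Prod>i<n. if i = 0 then f i ^ N else 1)"
      unfolding mon_def by (intro prod.cong) auto
    also have "\<dots> = u ^ N" by (simp add: prod.delta n_def f0)
    finally show ?thesis by simp
  qed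
  have "val n f L = c N * (u ^ N * f (Suc N)) + Hf"
    unfolding L_def LH(2) by (simp add: val_def mes)
  then have v0: "val n f L = 0" using eq0 unfolding Hf_def by simp
  have gL: "good K n L" using LH(1) cK unfolding L_def good_def n_def es_def by auto
  have "es \<notin> snd ` set LH"
  proof
    assume "es \<in> snd ` set LH"
    then obtain c0 where "(c0, es) \<in> set LH" by auto
    then have "es (Suc N) = 0" using LH(1) unfolding good_def by auto
    then show False by (simp add: es_def)
  qed
  then have "cf L es = c N" using cf_notin[of es LH] by (simp add: L_def cf_def)
  then have "alg_dependent K f n" using alg_dep_from_list[OF Ksf gL v0, of es] cN by simp
  then show ?thesis unfolding d_transcendental_def f_def by blast
qed

end

theorem lemma3p1:
  fixes F K :: "'a::field_char_0 set"
    and x p eta :: 'a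
    and d dp :: "'a \<Rightarrow> 'a"
  assumes der_d: "is_derivation d" and der_dp: "is_derivation dp"
    and commute: "\<And>a. d (dp a) = dp (d a)"
    and F_sub: "is_subfield F" and F_dp: "dp ` F \<subseteq> F"
    and F_dcl: "diff_closed F dp"
    and d_F: "\<And>a. a \<in> F \<Longrightarrow> d a = 0"
    and x_tr: "transcendental_over F x"
    and dx: "d x = 1" and dpx: "dp x = 0"
    and K_def: "K = field_gen (insert x F)"
    and p_K: "p \<in> K"
    and PPV: "\<exists>y1 y2. d (d y1) = p * d y1 \<and> d (d y2) = p * d y2 \<and>
               (\<forall>c1\<in>{a\<in>K. d a = 0}. \<forall>c2\<in>{a\<in>K. d a = 0}.
                   c1 * y1 + c2 * y2 = 0 \<longrightarrow> c1 = 0 \<and> c2 = 0) \<and>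
               dfield_gen {d, dp} (K \<union> {y1, y2}) = UNIV"
    and M_const: "{a. d a = 0} = {a\<in>K. d a = 0}"
    and eta_sol: "d (d eta) = p * d eta" and eta_nz: "d eta \<noteq> 0"
  shows "\<not> d_transcendental K dp (d eta) \<and>
         (\<exists>G. finite G \<and> dfield_gen {d, dp} (insert (d eta) K) = field_gen (K \<union> G))"
proof -
  have S: "sett F x d dp"
    by (rule sett.intro) (use der_d der_dp commute F_sub F_dp d_F x_tr dx dpx in auto)
  have Kd: "sett.K F x = K" using K_def by (simp add: sett.K_def[OF S])
  define u where "u = d eta"
  have du: "d u = p * u" using eta_sol by (simp add: u_def)
  have u0: "u \<noteq> 0" using eta_nz by (simp add: u_def)
  have Mc: "\<And>a. d a = 0 \<Longrightarrow> a \<in> sett.K F x" using M_const Kd by blast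
  have pK: "p \<in> sett.K F x" using p_K Kd by simp
  obtain N c Y where r: "\<forall>k. c k \<in> F" "c N \<noteq> 0" "Y \<in> sett.K F x"
      "(\<Sum>k\<le>N. c k * (dp ^^ k) (dp u / u)) = Y"
    using sett.relation[OF S pK Mc du u0] by blast
  have 1: "\<not> d_transcendental (sett.K F x) dp u"
    by (rule sett.not_dtrans[OF S du u0 r])
  have 2: "\<exists>G. finite G \<and> dfield_gen {d, dp} (insert u (sett.K F x)) = field_gen (sett.K F x \<union> G)"
    by (rule sett.fin_gen[OF S pK du u0 r])
  show ?thesis using 1 2 unfolding Kd u_def by blast
qed

end
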